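(* Let $(X,d)$ be a Ptolemaic metric space and let $p\in X$. Then the function $$\tilde\tau_p(x,y)=\log\Big(1+\frac{d(x,y)}{\sqrt{d(x,p)d(y,p)}}\Big)$$ is a metric on $X\setminus\{p\}$.
   Context: A metric space $(X,d)$ is Ptolemaic if $d(x,y)d(z,w)\leq d(x,z)d(y,w)+d(x,w)d(y,z)$ for all $x,y,z,w\in X$. *)

theory Defs
  imports "HOL-Analysis.Analysis"
begin

definition ptolemaic :: "'a set \<Rightarrow> ('a \<Rightarrow> 'a \<Rightarrow> real) \<Rightarrow> bool" where
  "ptolemaic M d \<longleftrightarrow>
     (\<forall>x\<in>M. \<forall>y\<in>M. \<forall>z\<in>M. \<forall>w\<in>M. d x y * d z w \<le> d x z * d y w + d x w * d y z)"

end

theory Submission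
  imports Defs
begin

lemma poly_key:
  fixes u v w aa bb cc :: real
  assumes pos: "u > 0" "v > 0" "w > 0" "aa \<ge> 0" "bb \<ge> 0"
    and h1: "cc * v \<le> aa * w + bb * u"
    and h2: "cc * u * w \<le> aa * u * v + bb * v * w"
    and h3: "\<bar>u^2 - v^2\<bar> \<le> aa * u * v"
    and h4: "\<bar>v^2 - w^2\<bar> \<le> bb * v * w"
  shows "cc \<le> aa + bb + aa * bb"
proof (cases "u \<le> v")
  case uv: True
  show ?thesis
  proof (cases "w \<le> v")
    case True
    have "aa * w + bb * u \<le> (aa+bb) * v" using uv True pos
      by (smt (verit) mult_left_mono distrib_right mult.commute)
    hence "cc * v \<le> (aa+bb) * v" using h1 by linarith
    hence "cc \<le> aa+bb" using pos by simp
    thus ?thesis using pos by (smt (verit) mult_nonneg_nonneg)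
  next
    case False
    have "(w-v) * w \<le> (w-v) * (w+v)" using False pos by (intro mult_left_mono) auto
    also have "\<dots> = w^2 - v^2" by (simp add: algebra_simps power2_eq_square)
    also have "\<dots> \<le> bb * v * w" using h4 by linarith
    finally have "(w-v) * w \<le> (bb * v) * w" by (simp add: mult.assoc)
    hence wv: "w - v \<le> bb * v" using pos by simp
    have "aa * w \<le> aa * (v + bb * v)" using wv pos by (intro mult_left_mono) auto
    moreover have "bb * u \<le> bb * v" using uv pos by (intro mult_left_mono) auto
    ultimately have "cc * v \<le> (aa + bb + aa * bb) * v" using h1 by (simp add: algebra_simps)
    thus ?thesis using pos by simp
  qed
next
  case uv: False
  show ?thesis
  proof (cases "w \<le> v")
    case True
    have "(u-v) * u \<le> (u-v) * (u+v)" using uv pos by (intro mult_left_mono) auto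
    also have "\<dots> = u^2 - v^2" by (simp add: algebra_simps power2_eq_square)
    also have "\<dots> \<le> aa * u * v" using h3 by linarith
    finally have "(u-v) * u \<le> (aa * v) * u" by (simp add: algebra_simps)
    hence wv: "u - v \<le> aa * v" using pos by simp
    have "bb * u \<le> bb * (v + aa * v)" using wv pos by (intro mult_left_mono) auto
    moreover have "aa * w \<le> aa * v" using True pos by (intro mult_left_mono) auto
    ultimately have "cc * v \<le> (aa + bb + aa * bb) * v" using h1 by (simp add: algebra_simps)
    thus ?thesis using pos by simp
  next
    case False
    have "aa * u * v \<le> aa * u * w" using False pos by (intro mult_left_mono) auto
    moreover have "bb * v * w \<le> bb * u * w" using uv pos
      by (simp add: mult.assoc mult_left_mono mult_right_mono)
    ultimately have "cc * (u * w) \<le> (aa+bb) * (u * w)" using h2 by (simp add: algebra_simps)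
    hence "cc \<le> aa+bb" using pos by simp
    thus ?thesis using pos by (smt (verit) mult_nonneg_nonneg)
  qed
qed

lemma key:
  fixes a b c x y z :: real
  assumes pos: "a > 0" "b > 0" "c > 0" "x \<ge> 0" "y \<ge> 0"
    and P: "z * b \<le> x * c + a * y" and T: "z \<le> x + y"
    and D1: "\<bar>a - b\<bar> \<le> x" and D2: "\<bar>b - c\<bar> \<le> y"
  shows "1 + z/sqrt(a * c) \<le> (1 + x/sqrt(a * b)) * (1 + y/sqrt(b * c))"
proof -
  define u v w where "u = sqrt a" "v = sqrt b" "w = sqrt c"
  have upos: "u > 0" "v > 0" "w > 0" using pos u_v_w_def by auto
  have sq: "a = u^2" "b = v^2" "c = w^2" using pos u_v_w_def by auto
  have s: "sqrt(a * c) = u * w" "sqrt(a * b) = u * v" "sqrt(b * c) = v * w"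
    using u_v_w_def by (auto simp: real_sqrt_mult)
  define aa bb cc where "aa = x/(u * v)" "bb = y/(v * w)" "cc = z/(u * w)"
  have xA: "x = aa * u * v" "y = bb * v * w" "z = cc * u * w" using upos aa_bb_cc_def by auto
  have A0: "aa \<ge> 0" "bb \<ge> 0" using pos upos aa_bb_cc_def by auto
  have h1': "(cc * v) * (u * v * w) \<le> (aa * w + bb * u) * (u * v * w)"
    using P unfolding xA sq by (simp add: algebra_simps power2_eq_square)
  hence h1: "cc * v \<le> aa * w + bb * u" using upos by simp
  have h2: "cc * u * w \<le> aa * u * v + bb * v * w" using T xA by simp
  have h3: "\<bar>u^2 - v^2\<bar> \<le> aa * u * v" using D1 sq xA by simp
  have h4: "\<bar>v^2 - w^2\<bar> \<le> bb * v * w" using D2 sq xA by simp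
  have "cc \<le> aa + bb + aa * bb" using poly_key[OF upos A0 h1 h2 h3 h4] .
  moreover have "z/sqrt(a * c) = cc" "x/sqrt(a * b) = aa" "y/sqrt(b * c) = bb"
    using s aa_bb_cc_def by auto
  ultimately show ?thesis by (simp add: algebra_simps)
qed

theorem theorem2p2:
  fixes M :: "'a set" and d :: "'a \<Rightarrow> 'a \<Rightarrow> real" and p :: 'a
  assumes "Metric_space M d" and "ptolemaic M d" and "p \<in> M"
  shows "Metric_space (M - {p}) (\<lambda>x y. ln (1 + d x y / sqrt (d x p * d y p)))"
proof -
  interpret Metric_space M d by fact
  have q0: "0 \<le> d x y / sqrt (d x p * d y p)" for x y by simp
  show ?thesis
  proof
    fix x y show "0 \<le> ln (1 + d x y / sqrt (d x p * d y p))" using q0[of x y] by simp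
  next
    fix x y show "ln (1 + d x y / sqrt (d x p * d y p)) = ln (1 + d y x / sqrt (d y p * d x p))"
      by (simp add: commute mult.commute)
  next
    fix x y assume xy: "x \<in> M - {p}" "y \<in> M - {p}"
    have "d x p > 0" "d y p > 0" using xy assms(3) zero[of x p] zero[of y p] nonneg[of x p] nonneg[of y p] by auto
    hence sp: "sqrt (d x p * d y p) > 0" by simp
    have "ln (1 + d x y / sqrt (d x p * d y p)) = 0 \<longleftrightarrow> d x y / sqrt (d x p * d y p) = 0"
      using q0[of x y] by (smt (verit) ln_eq_zero_iff)
    also have "\<dots> \<longleftrightarrow> d x y = 0" using sp by (metis divide_eq_0_iff less_irrefl)
    also have "\<dots> \<longleftrightarrow> x = y" using xy by simp
    finally show "ln (1 + d x y / sqrt (d x p * d y p)) = 0 \<longleftrightarrow> x = y" .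
  next
    fix x y z assume xyz: "x \<in> M - {p}" "y \<in> M - {p}" "z \<in> M - {p}"
    have a: "d x p > 0" "d y p > 0" "d z p > 0"
      using xyz assms(3) zero[of x p] zero[of y p] zero[of z p]
        nonneg[of x p] nonneg[of y p] nonneg[of z p] by auto
    have P: "d x z * d y p \<le> d x y * d z p + d x p * d y z"
      using assms(2) xyz assms(3) unfolding ptolemaic_def
      by (metis Diff_iff commute)
    have T: "d x z \<le> d x y + d y z" using xyz triangle by auto
    have D1: "\<bar>d x p - d y p\<bar> \<le> d x y"
      using xyz assms(3) triangle[of x y p] triangle[of y x p] commute[of x y] by auto
    have D2: "\<bar>d y p - d z p\<bar> \<le> d y z"
      using xyz assms(3) triangle[of y z p] triangle[of z y p] commute[of y z] by auto
    have k: "1 + d x z / sqrt (d x p * d z p) \<le> (1 + d x y / sqrt (d x p * d y p)) * (1 + d y z / sqrt (d y p * d z p))"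
      using key[OF a nonneg nonneg P T D1 D2] .
    have "ln (1 + d x z / sqrt (d x p * d z p)) \<le> ln ((1 + d x y / sqrt (d x p * d y p)) * (1 + d y z / sqrt (d y p * d z p)))"
      using k q0[of x z] q0[of x y] q0[of y z] by (subst ln_le_cancel_iff) (auto intro!: add_pos_nonneg mult_pos_pos)
    also have "\<dots> = ln (1 + d x y / sqrt (d x p * d y p)) + ln (1 + d y z / sqrt (d y p * d z p))"
      using q0[of x y] q0[of y z] by (intro ln_mult_pos) (auto intro!: add_pos_nonneg)
    finally show "ln (1 + d x z / sqrt (d x p * d z p)) \<le> ln (1 + d x y / sqrt (d x p * d y p)) + ln (1 + d y z / sqrt (d y p * d z p))" .
  qed
qed

end
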